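(* Let $G$ be an abstract $k$-molecule and let $A_k,B_k\subseteq V_G$ be such that both $(G,A_k)$ and $(G,B_k)$ are $k$-premolecules. Then (i) the subgraphs of $G$ induced by $A_k\setminus B_k$, by $B_k\setminus A_k$ and by $V_G\setminus(A_k\cup B_k)$ are all discrete (edgeless), and (ii) the subgraphs of $G$ induced by $A_k$ and by $B_k$ are isomorphic.
   Context: Graphs are finite and undirected; the connectivity of a graph is the largest $k$ such that one must remove at least $k$ vertices to disconnect it (by convention $K_m$, $m\ge3$, has connectivity $m-1$). $k$-molecule: for $k,h\ge1$, $B=\{b_1,\dots,b_k\}$ and a set $\mathcal B$ of edges among vertices of $B$, $\vartheta_{B}^{\mathcal B,h}$ is the graph with vertex set $B\cup\{v_1,\dots,v_h\}$ and edge set $\mathcal B\cup\{v_ib_j:1\le i\le h,1\le j\le k\}$, where $h\ge k-k'$, $k'$ being the connectivity of the subgraph induced by $B$. For a graph $G$ and $A\subseteq V_G$ with $|A|=k$, $(G,A)$ is a $k$-premolecule if there is a $k$-molecule $\vartheta_{B}^{\mathcal B,h}$ and an isomorphism $G\to\vartheta_{B}^{\mathcal B,h}$ mapping $A$ onto $B$; $G$ is an abstract $k$-molecule if such an $A$ exists. *)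

theory Defs
  imports Main
begin

type_synonym 'a graph = "'a set \<times> 'a set set"

definition verts :: "'a graph \<Rightarrow> 'a set" where "verts G = fst G"
definition edges :: "'a graph \<Rightarrow> 'a set set" where "edges G = snd G"

definition is_graph :: "'a graph \<Rightarrow> bool" where
  "is_graph G \<longleftrightarrow> finite (verts G) \<and>
     (\<forall>e\<in>edges G. e \<subseteq> verts G \<and> card e = 2)"

definition induced :: "'a graph \<Rightarrow> 'a set \<Rightarrow> 'a graph" where
  "induced G S = (verts G \<inter> S, {e \<in> edges G. e \<subseteq> S})"

definition discrete :: "'a graph \<Rightarrow> bool" where
  "discrete G \<longleftrightarrow> edges G = {}"

definition adj :: "'a graph \<Rightarrow> 'a \<Rightarrow> 'a \<Rightarrow> bool" where
  "adj G u v \<longleftrightarrow> u \<in> verts G \<and> v \<in> verts G \<and> {u, v} \<in> edges G"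

definition connected_graph :: "'a graph \<Rightarrow> bool" where
  "connected_graph G \<longleftrightarrow> (\<forall>u\<in>verts G. \<forall>v\<in>verts G. (adj G)\<^sup>*\<^sup>* u v)"

text \<open>Vertex connectivity: the least number of vertices whose removal disconnects
  the graph or leaves at most one vertex (so that \<open>K_m\<close> has connectivity \<open>m-1\<close>).\<close>
definition connectivity :: "'a graph \<Rightarrow> nat" where
  "connectivity G = (LEAST n. \<exists>S \<subseteq> verts G. card S = n \<and>
      (card (verts G - S) \<le> 1 \<or> \<not> connected_graph (induced G (verts G - S))))"

definition graph_iso :: "('a \<Rightarrow> 'b) \<Rightarrow> 'a graph \<Rightarrow> 'b graph \<Rightarrow> bool" where
  "graph_iso f G H \<longleftrightarrow> bij_betw f (verts G) (verts H) \<and>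
     (\<forall>u\<in>verts G. \<forall>v\<in>verts G. {u, v} \<in> edges G \<longleftrightarrow> {f u, f v} \<in> edges H)"

definition isomorphic :: "'a graph \<Rightarrow> 'b graph \<Rightarrow> bool" where
  "isomorphic G H \<longleftrightarrow> (\<exists>f. graph_iso f G H)"

definition molecule_graph :: "'b set \<Rightarrow> 'b set set \<Rightarrow> 'b set \<Rightarrow> 'b graph" where
  "molecule_graph B \<B> V = (B \<union> V, \<B> \<union> {{v, b} | v b. v \<in> V \<and> b \<in> B})"

text \<open>Side conditions for \<open>\<vartheta>_B^{\<B>,h}\<close> to be a \<open>k\<close>-molecule, with \<open>h = card V\<close>.\<close>
definition valid_molecule :: "nat \<Rightarrow> 'b set \<Rightarrow> 'b set set \<Rightarrow> 'b set \<Rightarrow> bool" where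
  "valid_molecule k B \<B> V \<longleftrightarrow> k \<ge> 1 \<and> finite B \<and> card B = k \<and> finite V \<and>
     card V \<ge> 1 \<and> B \<inter> V = {} \<and>
     (\<forall>e\<in>\<B>. e \<subseteq> B \<and> card e = 2) \<and>
     card V \<ge> k - connectivity (B, \<B>)"

text \<open>\<open>(G,A)\<close> is a \<open>k\<close>-premolecule. The model molecule is built on vertices of type nat
  (any finite graph has an isomorphic copy there).\<close>
definition premolecule :: "nat \<Rightarrow> 'a graph \<Rightarrow> 'a set \<Rightarrow> bool" where
  "premolecule k G A \<longleftrightarrow> A \<subseteq> verts G \<and> card A = k \<and>
     (\<exists>(B::nat set) \<B> V f. valid_molecule k B \<B> V \<and>
        graph_iso f G (molecule_graph B \<B> V) \<and> f ` A = B)"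

definition abstract_molecule :: "nat \<Rightarrow> 'a graph \<Rightarrow> bool" where
  "abstract_molecule k G \<longleftrightarrow> (\<exists>A. premolecule k G A)"

end

theory Submission
  imports Defs
begin

lemma pm_facts:
  assumes "is_graph G" "premolecule k G A"
  shows "A \<subseteq> verts G" "card A = k" "finite (verts G)"
    "\<And>u v. u \<in> verts G - A \<Longrightarrow> v \<in> verts G - A \<Longrightarrow> {u,v} \<notin> edges G"
    "\<And>u a. u \<in> verts G - A \<Longrightarrow> a \<in> A \<Longrightarrow> {u,a} \<in> edges G"
proof -
  show "A \<subseteq> verts G" "card A = k" using assms(2) unfolding premolecule_def by auto
  show "finite (verts G)" using assms(1) unfolding is_graph_def by auto
  obtain B :: "nat set" and \<B> V f where vm: "valid_molecule k B \<B> V"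
    and iso: "graph_iso f G (molecule_graph B \<B> V)" and fA: "f ` A = B"
    using assms(2) unfolding premolecule_def by blast
  have bij: "bij_betw f (verts G) (B \<union> V)"
    using iso unfolding graph_iso_def molecule_graph_def verts_def by auto
  have ed: "\<And>u v. u \<in> verts G \<Longrightarrow> v \<in> verts G \<Longrightarrow>
     {u,v} \<in> edges G \<longleftrightarrow> {f u, f v} \<in> \<B> \<union> {{v, b} | v b. v \<in> V \<and> b \<in> B}"
    using iso unfolding graph_iso_def molecule_graph_def verts_def edges_def by auto
  have AV: "A \<subseteq> verts G" using assms(2) unfolding premolecule_def by auto
  have inV: "f u \<in> V" if "u \<in> verts G - A" for u
  proof -
    have "f u \<in> B \<union> V" using bij that bij_betwE by blast
    moreover have "f u \<notin> B"
    proof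
      assume "f u \<in> B"
      then obtain a where "a \<in> A" "f a = f u" using fA by auto
      then have "a = u" using bij AV that unfolding bij_betw_def inj_on_def by blast
      then show False using that \<open>a \<in> A\<close> by auto
    qed
    ultimately show ?thesis by auto
  qed
  have disj: "B \<inter> V = {}" and bsub: "\<forall>e\<in>\<B>. e \<subseteq> B" using vm unfolding valid_molecule_def by auto
  show "{u,v} \<notin> edges G" if "u \<in> verts G - A" "v \<in> verts G - A" for u v
  proof
    assume "{u,v} \<in> edges G"
    then have "{f u, f v} \<in> \<B> \<union> {{v, b} | v b. v \<in> V \<and> b \<in> B}" using ed that by auto
    moreover have "f u \<in> V" "f v \<in> V" using inV that by auto
    ultimately show False using disj bsub by (auto simp: doubleton_eq_iff) blast
  qed
  show "{u,a} \<in> edges G" if "u \<in> verts G - A" "a \<in> A" for u a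
  proof -
    have "f u \<in> V" using inV that by auto
    moreover have "f a \<in> B" using fA that by auto
    ultimately have "{f u, f a} \<in> \<B> \<union> {{v, b} | v b. v \<in> V \<and> b \<in> B}" by blast
    then show ?thesis using ed that AV by auto
  qed
qed

lemma disc:
  assumes "is_graph G" "\<And>u v. u \<in> verts G \<Longrightarrow> v \<in> verts G \<Longrightarrow> u \<in> S \<Longrightarrow> v \<in> S \<Longrightarrow> {u,v} \<notin> edges G"
  shows "discrete (induced G S)"
  unfolding discrete_def
proof (rule ccontr)
  assume "edges (induced G S) \<noteq> {}"
  then obtain e where e: "e \<in> edges G" "e \<subseteq> S" unfolding induced_def edges_def by auto
  then have "e \<subseteq> verts G" "card e = 2" using assms(1) unfolding is_graph_def by auto
  then obtain x y where "e = {x,y}" by (meson card_2_iff)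
  then show False using assms(2) e \<open>e \<subseteq> verts G\<close> by auto
qed

theorem mainTheorem9:
  fixes G :: "'a graph" and k :: nat and A B :: "'a set"
  assumes "is_graph G"
    and "abstract_molecule k G"
    and "premolecule k G A"
    and "premolecule k G B"
  shows "discrete (induced G (A - B)) \<and> discrete (induced G (B - A)) \<and>
         discrete (induced G (verts G - (A \<union> B))) \<and>
         isomorphic (induced G A) (induced G B)"
proof -
  note a = pm_facts[OF assms(1) assms(3)]
  note b = pm_facts[OF assms(1) assms(4)]
  have d1: "discrete (induced G (A - B))" by (rule disc[OF assms(1)]) (use b(4) in auto)
  have d2: "discrete (induced G (B - A))" by (rule disc[OF assms(1)]) (use a(4) in auto)
  have d3: "discrete (induced G (verts G - (A \<union> B)))" by (rule disc[OF assms(1)]) (use a(4) in auto)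
  have fin: "finite A" "finite B" using a(1,3) b(1) finite_subset by auto
  have iso: "isomorphic (induced G A) (induced G B)"
  proof (cases "A = B")
    case True
    have "graph_iso id (induced G A) (induced G B)"
      unfolding True graph_iso_def by auto
    then show ?thesis unfolding isomorphic_def by blast
  next
    case False
    have cd: "card (A - B) = card (B - A)"
      using fin a(2) b(2) by (metis card_Diff_subset_Int Int_commute finite_Int)
    obtain g where g: "bij_betw g (A - B) (B - A)"
      using cd fin finite_same_card_bij by blast
    define h where "h = (\<lambda>x. if x \<in> B then x else g x)"
    have vA: "verts (induced G A) = A" "verts (induced G B) = B"
      using a(1) b(1) unfolding induced_def verts_def by auto
    have eI: "\<And>S e. e \<in> edges (induced G S) \<longleftrightarrow> e \<in> edges G \<and> e \<subseteq> S"
      unfolding induced_def edges_def by auto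
    have bh: "bij_betw h A B"
    proof -
      have 1: "bij_betw h (A - B) (B - A)" using g unfolding h_def
        by (rule bij_betw_cong[THEN iffD1, rotated]) auto
      have 2: "bij_betw h (A \<inter> B) (A \<inter> B)" unfolding h_def
        by (rule bij_betw_cong[THEN iffD1, rotated, of id]) auto
      have "bij_betw h ((A \<inter> B) \<union> (A - B)) ((A \<inter> B) \<union> (B - A))"
        by (rule bij_betw_combine[OF 2 1]) auto
      moreover have "(A \<inter> B) \<union> (A - B) = A" "(A \<inter> B) \<union> (B - A) = B" by auto
      ultimately show ?thesis by simp
    qed
    have gZ: "x \<in> A - B \<Longrightarrow> g x \<in> B - A" for x using g bij_betwE by blast
    have hedge: "{u,v} \<in> edges G \<longleftrightarrow> {h u, h v} \<in> edges G" if uv: "u \<in> A" "v \<in> A" for u v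
    proof -
      have uG: "u \<in> verts G" "v \<in> verts G" using uv a(1) by auto
      have hG: "h u \<in> verts G" "h v \<in> verts G" using bh uv b(1) bij_betwE by blast+
      show ?thesis
      proof (cases "u \<in> B"; cases "v \<in> B")
        assume "u \<in> B" "v \<in> B" then show ?thesis by (simp add: h_def)
      next
        assume "u \<in> B" "v \<notin> B"
        then have "{v,u} \<in> edges G" using b(5) uG by auto
        moreover have "{h v, h u} \<in> edges G" using a(5)[of "h v" "h u"] \<open>u \<in> B\<close> \<open>v \<notin> B\<close> uv gZ hG
          by (auto simp: h_def)
        ultimately show ?thesis by (simp add: insert_commute)
      next
        assume "u \<notin> B" "v \<in> B"
        then have "{u,v} \<in> edges G" using b(5) uG by auto
        moreover have "{h u, h v} \<in> edges G" using a(5)[of "h u" "h v"] \<open>u \<notin> B\<close> \<open>v \<in> B\<close> uv gZ hG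
          by (auto simp: h_def)
        ultimately show ?thesis by simp
      next
        assume "u \<notin> B" "v \<notin> B"
        then have "{u,v} \<notin> edges G" using b(4) uG by auto
        moreover have "{h u, h v} \<notin> edges G" using a(4)[of "h u" "h v"] \<open>u \<notin> B\<close> \<open>v \<notin> B\<close> uv gZ hG
          by (auto simp: h_def)
        ultimately show ?thesis by simp
      qed
    qed
    have "graph_iso h (induced G A) (induced G B)"
      unfolding graph_iso_def vA eI
    proof (intro conjI ballI bh)
      fix u v assume uv: "u \<in> A" "v \<in> A"
      have "h u \<in> B" "h v \<in> B" using bh uv bij_betwE by blast+
      then show "({u, v} \<in> edges G \<and> {u, v} \<subseteq> A) = ({h u, h v} \<in> edges G \<and> {h u, h v} \<subseteq> B)"
        using hedge[OF uv] uv by auto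
    qed
    then show ?thesis unfolding isomorphic_def by blast
  qed
  show ?thesis using d1 d2 d3 iso by blast
qed

end
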